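(* Let $G_1,\dots,G_n$ be rooted graphs and let $G$ be the decorated path obtained from them, with path vertices $1,\dots,n$. Assume that $\alpha_i^{G_i}=\alpha_{n+1-i}^{G_{n+1-i}}$ for all $i\in\{1,\dots,n\}$. Then $\alpha_1^G=\alpha_n^G$.
   Context: Graphs are finite and simple. For a graph $H$, $\phi^H$ is the characteristic polynomial of its adjacency matrix (variable $x$), and for a vertex $i$ of $H$, $\alpha_i^H=\phi^H/\phi^{H\setminus i}$ as a rational function. A rooted graph is a graph with a distinguished vertex (its root). The decorated path built from rooted graphs $G_1,\dots,G_n$ (pairwise disjoint) is obtained from the path on vertices $1,\dots,n$ (with $i\sim i+1$) by identifying the root of $G_i$ with vertex $i$. The root of $G_i$ is thus called $i$, and $\alpha_i^{G_i}$ is taken at that root. *)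

theory Defs
  imports "HOL-Computational_Algebra.Polynomial" "HOL-Computational_Algebra.Fraction_Field"
          "HOL-Combinatorics.Permutations"
begin

type_synonym 'a graph = "'a set \<times> 'a set set"

definition verts :: "'a graph \<Rightarrow> 'a set" where "verts G = fst G"
definition edges :: "'a graph \<Rightarrow> 'a set set" where "edges G = snd G"

definition simple_graph :: "'a graph \<Rightarrow> bool" where
  "simple_graph G \<longleftrightarrow> finite (verts G) \<and>
     (\<forall>e\<in>edges G. e \<subseteq> verts G \<and> card e = 2)"

definition adj :: "'a graph \<Rightarrow> 'a \<Rightarrow> 'a \<Rightarrow> int" where
  "adj G u v = (if {u, v} \<in> edges G then 1 else 0)"

text \<open>Characteristic polynomial det(x I - A) of the adjacency matrix A,
  written out via the Leibniz formula over permutations of the vertex set.\<close>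
definition charpoly :: "'a graph \<Rightarrow> int poly" where
  "charpoly G = (\<Sum>p | p permutes verts G. of_int (sign p) *
      (\<Prod>v\<in>verts G. (if p v = v then [:0, 1:] else 0) - [:adj G v (p v):]))"

definition delete_vertex :: "'a graph \<Rightarrow> 'a \<Rightarrow> 'a graph" where
  "delete_vertex G i = (verts G - {i}, {e \<in> edges G. i \<notin> e})"

definition alpha :: "'a graph \<Rightarrow> 'a \<Rightarrow> int poly fract" where
  "alpha H i = Fract (charpoly H) (charpoly (delete_vertex H i))"

text \<open>Decorated path: rooted graphs (Gs i, r i), i = 1..n, pairwise disjoint;
  path vertex i is identified with the root r i, and edges {r i, r (i+1)} are added.\<close>
definition decorated_path :: "nat \<Rightarrow> (nat \<Rightarrow> 'a graph) \<Rightarrow> (nat \<Rightarrow> 'a) \<Rightarrow> 'a graph" where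
  "decorated_path n Gs r =
     ((\<Union>i\<in>{1..n}. verts (Gs i)),
      (\<Union>i\<in>{1..n}. edges (Gs i)) \<union> {{r i, r (Suc i)} | i. 1 \<le> i \<and> i < n})"

end

theory Submission imports Defs
begin

definition detS :: "('a \<Rightarrow> 'a \<Rightarrow> 'b::comm_ring_1) \<Rightarrow> 'a set \<Rightarrow> 'b" where
  "detS M S = (\<Sum>p | p permutes S. of_int (sign p) * (\<Prod>v\<in>S. M v (p v)))"

definition cmat :: "'a graph \<Rightarrow> 'a \<Rightarrow> 'a \<Rightarrow> int poly" where
  "cmat G v w = (if w = v then [:0, 1:] else 0) - [:adj G v w:]"

lemma charpoly_detS: "charpoly G = detS (cmat G) (verts G)"
  unfolding charpoly_def detS_def cmat_def ..

lemma detS_cong: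
  assumes "\<And>x y. x \<in> S \<Longrightarrow> y \<in> S \<Longrightarrow> M x y = M' x y"
  shows "detS M S = detS M' S"
  unfolding detS_def
  by (intro sum.cong refl arg_cong2[where f="(*)"] prod.cong)
     (auto intro!: assms simp: permutes_in_image)

lemma detS_empty [simp]: "detS M {} = 1"
  unfolding detS_def by simp

lemma detS_core:
  fixes M :: "'a \<Rightarrow> 'a \<Rightarrow> 'b::comm_ring_1"
  assumes f1: "finite S1" and f2: "finite S2" and dj: "S1 \<inter> S2 = {}"
  shows "(\<Sum>p | p permutes (S1 \<union> S2) \<and> (\<forall>x\<in>S1. p x \<in> S1).
            of_int (sign p) * (\<Prod>v\<in>S1 \<union> S2. M v (p v))) = detS M S1 * detS M S2"
proof -
  let ?S = "S1 \<union> S2"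
  let ?Q = "{p. p permutes ?S \<and> (\<forall>x\<in>S1. p x \<in> S1)}"
  let ?T = "{p. p permutes S1} \<times> {p. p permutes S2}"
  let ?g = "\<lambda>(p1, p2). (of_int (sign p1) * (\<Prod>v\<in>S1. M v (p1 v))) *
                         (of_int (sign p2) * (\<Prod>v\<in>S2. M v (p2 v)))"
  let ?h = "\<lambda>p. of_int (sign p) * (\<Prod>v\<in>?S. M v (p v))"
  let ?j = "\<lambda>p. (\<lambda>x. if x \<in> S1 then p x else x, \<lambda>x. if x \<in> S2 then p x else x)"
  let ?i = "\<lambda>(p1::'a\<Rightarrow>'a, p2). p1 \<circ> p2"
  have fS: "finite ?S" using f1 f2 by simp
  have rhs: "detS M S1 * detS M S2 = sum ?g ?T"
    unfolding detS_def sum_product sum.cartesian_product by simp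
  have "sum ?g ?T = sum ?h ?Q"
  proof (rule sum.reindex_bij_witness[where i = ?j and j = ?i])
    fix a assume a: "a \<in> ?Q"
    then have ap: "a permutes ?S" and a1: "\<forall>x\<in>S1. a x \<in> S1" by auto
    have inj: "inj a" using ap permutes_inj by blast
    have im1: "a ` S1 = S1"
      by (rule endo_inj_surj[OF f1]) (use a1 inj in \<open>auto intro: inj_on_subset\<close>)
    have imS: "a ` ?S = ?S" using ap permutes_image by blast
    have im2: "a ` S2 = S2"
    proof -
      have "S2 = ?S - S1" using dj by auto
      then have "a ` S2 = a ` (?S - S1)" by simp
      also have "\<dots> = a ` ?S - a ` S1" using inj by (simp add: image_set_diff)
      finally show ?thesis using imS im1 dj by auto
    qed
    have a2: "\<forall>x\<in>S2. a x \<in> S2" using im2 by auto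
    show "?i (?j a) = a"
    proof
      fix x
      show "?i (?j a) x = a x"
        using a1 a2 dj permutes_not_in[OF ap, of x] by (auto simp: disjoint_iff)
    qed
    have b1: "bij_betw a S1 S1" unfolding bij_betw_def using im1 inj_on_subset[OF inj subset_UNIV] by blast
    have b2: "bij_betw a S2 S2" unfolding bij_betw_def using im2 inj_on_subset[OF inj subset_UNIV] by blast
    have "(\<lambda>x. if x \<in> S1 then a x else x) permutes S1"
      by (rule bij_imp_permutes) (auto intro: bij_betw_cong[THEN iffD1, OF _ b1])
    moreover have "(\<lambda>x. if x \<in> S2 then a x else x) permutes S2"
      by (rule bij_imp_permutes) (auto intro: bij_betw_cong[THEN iffD1, OF _ b2])
    ultimately show "?j a \<in> ?T" by simp
  next
    fix b assume b: "b \<in> ?T"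
    obtain p1 p2 where bb: "b = (p1, p2)" and p1: "p1 permutes S1" and p2: "p2 permutes S2"
      using b by auto
    have e1: "\<And>x. x \<notin> S1 \<Longrightarrow> p1 x = x" and e2: "\<And>x. x \<notin> S2 \<Longrightarrow> p2 x = x"
      using p1 p2 permutes_not_in by metis+
    have i1: "\<And>x. x \<in> S1 \<Longrightarrow> p1 x \<in> S1" and i2: "\<And>x. x \<in> S2 \<Longrightarrow> p2 x \<in> S2"
      using p1 p2 permutes_in_image by metis+
    show "?j (?i b) = b"
      using bb e1 e2 i2 dj by (auto simp: fun_eq_iff disjoint_iff)
    have "p1 \<circ> p2 permutes ?S"
      by (rule permutes_compose) (auto intro: permutes_subset[OF p1] permutes_subset[OF p2])
    moreover have "\<forall>x\<in>S1. (p1 \<circ> p2) x \<in> S1"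
    proof
      fix x assume x: "x \<in> S1"
      then have "x \<notin> S2" using dj by auto
      then have "p2 x = x" by (rule e2)
      then show "(p1 \<circ> p2) x \<in> S1" using i1[OF x] by simp
    qed
    ultimately show "?i b \<in> ?Q" using bb by simp
    have sg: "sign (p1 \<circ> p2) = sign p1 * sign p2"
      by (rule sign_compose) (auto intro: permutes_imp_permutation[OF f1 p1] permutes_imp_permutation[OF f2 p2])
    have "(\<Prod>v\<in>?S. M v ((p1 \<circ> p2) v)) = (\<Prod>v\<in>S1. M v ((p1 \<circ> p2) v)) * (\<Prod>v\<in>S2. M v ((p1 \<circ> p2) v))"
      using f1 f2 dj by (rule prod.union_disjoint)
    also have "(\<Prod>v\<in>S1. M v ((p1 \<circ> p2) v)) = (\<Prod>v\<in>S1. M v (p1 v))"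
    proof (rule prod.cong[OF refl])
      fix x assume x: "x \<in> S1"
      then have "x \<notin> S2" using dj by auto
      then have "p2 x = x" by (rule e2)
      then show "M x ((p1 \<circ> p2) x) = M x (p1 x)" by simp
    qed
    also have "(\<Prod>v\<in>S2. M v ((p1 \<circ> p2) v)) = (\<Prod>v\<in>S2. M v (p2 v))"
    proof (rule prod.cong[OF refl])
      fix x assume x: "x \<in> S2"
      then have "p2 x \<in> S2" by (rule i2)
      then have "p2 x \<notin> S1" using dj by auto
      then have "p1 (p2 x) = p2 x" by (rule e1)
      then show "M x ((p1 \<circ> p2) x) = M x (p2 x)" by simp
    qed
    finally show "?h (?i b) = ?g b" using bb sg by (simp add: algebra_simps)
  qed
  then show ?thesis using rhs by simp
qed

lemma detS_term_zero:
  assumes "x \<in> S" "M x (p x) = 0" "finite S"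
  shows "of_int (sign p) * (\<Prod>v\<in>S. M v (p v)) = (0::'b::comm_ring_1)"
  using assms by (metis mult_zero_right prod_zero)

lemma detS_block:
  fixes M :: "'a \<Rightarrow> 'a \<Rightarrow> 'b::comm_ring_1"
  assumes f1: "finite S1" and f2: "finite S2" and dj: "S1 \<inter> S2 = {}"
    and z: "\<And>x y. x \<in> S1 \<Longrightarrow> y \<in> S2 \<Longrightarrow> M x y = 0"
  shows "detS M (S1 \<union> S2) = detS M S1 * detS M S2"
proof -
  have "detS M (S1 \<union> S2) = (\<Sum>p | p permutes (S1 \<union> S2) \<and> (\<forall>x\<in>S1. p x \<in> S1).
            of_int (sign p) * (\<Prod>v\<in>S1 \<union> S2. M v (p v)))"
    unfolding detS_def
  proof (rule sum.mono_neutral_right)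
    show "finite {p. p permutes S1 \<union> S2}" using f1 f2 by (simp add: finite_permutations)
    show "{p. p permutes S1 \<union> S2 \<and> (\<forall>x\<in>S1. p x \<in> S1)} \<subseteq> {p. p permutes S1 \<union> S2}" by auto
    show "\<forall>p\<in>{p. p permutes S1 \<union> S2} - {p. p permutes S1 \<union> S2 \<and> (\<forall>x\<in>S1. p x \<in> S1)}.
        of_int (sign p) * (\<Prod>v\<in>S1 \<union> S2. M v (p v)) = 0"
    proof
      fix p assume "p \<in> {p. p permutes S1 \<union> S2} - {p. p permutes S1 \<union> S2 \<and> (\<forall>x\<in>S1. p x \<in> S1)}"
      then obtain x where p: "p permutes S1 \<union> S2" and x: "x \<in> S1" "p x \<notin> S1" by auto
      have "p x \<in> S2" using permutes_in_image[OF p, of x] x by auto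
      then show "of_int (sign p) * (\<Prod>v\<in>S1 \<union> S2. M v (p v)) = 0"
        by (intro detS_term_zero[of x]) (use x z f1 f2 in auto)
    qed
  qed
  then show ?thesis using detS_core[OF f1 f2 dj] by simp
qed

lemma detS_bridge:
  fixes M :: "'a \<Rightarrow> 'a \<Rightarrow> 'b::comm_ring_1"
  assumes f1: "finite S1" and f2: "finite S2" and dj: "S1 \<inter> S2 = {}"
    and u: "u \<in> S1" and v: "v \<in> S2"
    and z1: "\<And>x y. x \<in> S1 \<Longrightarrow> y \<in> S2 \<Longrightarrow> (x \<noteq> u \<or> y \<noteq> v) \<Longrightarrow> M x y = 0"
    and z2: "\<And>x y. x \<in> S1 \<Longrightarrow> y \<in> S2 \<Longrightarrow> (x \<noteq> u \<or> y \<noteq> v) \<Longrightarrow> M y x = 0"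
  shows "detS M (S1 \<union> S2) = detS M S1 * detS M S2
           - M u v * M v u * detS M (S1 - {u}) * detS M (S2 - {v})"
proof -
  let ?S = "S1 \<union> S2"
  let ?f = "\<lambda>p. of_int (sign p) * (\<Prod>v\<in>?S. M v (p v))"
  let ?P = "{p. p permutes ?S}"
  let ?Q = "{p. p permutes ?S \<and> (\<forall>x\<in>S1. p x \<in> S1)}"
  let ?R = "{p. p permutes ?S \<and> p u = v \<and> p v = u \<and> (\<forall>x\<in>S1-{u}. p x \<in> S1)}"
  let ?S1' = "S1 - {u}" and ?S2' = "S2 - {v}"
  let ?Q' = "{q. q permutes (?S1' \<union> ?S2') \<and> (\<forall>x\<in>?S1'. q x \<in> ?S1')}"
  have fS: "finite ?S" using f1 f2 by simp
  have uv: "u \<noteq> v" using u v dj by auto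
  have vS1: "v \<notin> S1" and uS2: "u \<notin> S2" using u v dj by auto
  have "sum ?f ?P = sum ?f (?P - ?Q) + sum ?f ?Q"
    by (intro sum.subset_diff) (use fS in \<open>auto simp: finite_permutations\<close>)
  then have "sum ?f ?P = sum ?f ?Q + sum ?f (?P - ?Q)" by (simp add: add.commute)
  also have "sum ?f ?Q = detS M S1 * detS M S2" by (rule detS_core[OF f1 f2 dj])
  also have "sum ?f (?P - ?Q) = sum ?f ?R"
  proof (rule sum.mono_neutral_right)
    show "finite (?P - ?Q)" using fS by (simp add: finite_permutations)
    show "?R \<subseteq> ?P - ?Q" using u vS1 by auto
    show "\<forall>p\<in>?P - ?Q - ?R. ?f p = 0"
    proof
      fix p assume pin: "p \<in> ?P - ?Q - ?R"
      then have p: "p permutes ?S" by auto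
      show "?f p = 0"
      proof (rule ccontr)
        assume nz: "?f p \<noteq> 0"
        have nzx: "\<And>x. x \<in> ?S \<Longrightarrow> M x (p x) \<noteq> 0"
          using nz detS_term_zero[OF _ _ fS, of _ M p] by blast
        have inS: "\<And>x. x \<in> ?S \<Longrightarrow> p x \<in> ?S" by (simp only: permutes_in_image[OF p])
        have c1: "\<And>x. x \<in> S1 \<Longrightarrow> p x \<in> S2 \<Longrightarrow> x = u \<and> p x = v"
          using nzx z1 by blast
        have c2: "\<And>y. y \<in> S2 \<Longrightarrow> p y \<in> S1 \<Longrightarrow> y = v \<and> p y = u"
          using nzx z2 by blast
        obtain x where x: "x \<in> S1" "p x \<notin> S1" using pin by auto
        have pu: "p u = v" using c1[of x] x inS by auto
        have s1: "\<forall>x\<in>S1-{u}. p x \<in> S1" using c1 inS by auto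
        have inj: "inj p" using p permutes_inj by blast
        have "card (p ` (S1 - {u})) = card (S1 - {u})"
          using inj by (simp add: card_image inj_on_subset)
        also have "\<dots> < card S1" using f1 u by (rule card_Diff1_less)
        finally have lt: "card (p ` (S1 - {u})) < card S1" .
        have "\<not> S1 \<subseteq> p ` (S1 - {u})"
        proof
          assume "S1 \<subseteq> p ` (S1 - {u})"
          then have "card S1 \<le> card (p ` (S1 - {u}))" by (rule card_mono[rotated]) (use f1 in auto)
          with lt show False by simp
        qed
        then obtain y where y: "y \<in> S1" "y \<notin> p ` (S1 - {u})" by auto
        have "y \<in> p ` ?S" using p y by (simp add: permutes_image)
        then obtain w where w: "w \<in> ?S" "p w = y" by auto
        have "w \<notin> S1 - {u}" using w y by auto
        moreover have "w \<noteq> u" using w y pu vS1 by auto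
        ultimately have "w \<in> S2" using w by auto
        then have "w = v \<and> p w = u" using c2 w y by auto
        then have "p v = u" by auto
        then have "p \<in> ?R" using p pu s1 by auto
        then show False using pin by auto
      qed
    qed
  qed
  also have "sum ?f ?R = sum (\<lambda>q. - (M u v * M v u) *
        (of_int (sign q) * (\<Prod>x\<in>?S1' \<union> ?S2'. M x (q x)))) ?Q'"
  proof (rule sym, rule sum.reindex_bij_witness[where i = "\<lambda>q. q \<circ> transpose u v" and j = "\<lambda>q. q \<circ> transpose u v"])
    fix p assume "p \<in> ?R"
    then have p: "p permutes ?S" "p u = v" "p v = u" "\<forall>x\<in>S1-{u}. p x \<in> S1" by auto
    show "p \<circ> transpose u v \<circ> transpose u v = p" by (simp add: comp_assoc)
    have "p \<circ> transpose u v permutes ?S"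
      by (rule permutes_compose[OF permutes_swap_id p(1)]) (use u v in auto)
    then have "p \<circ> transpose u v permutes (?S1' \<union> ?S2')"
      by (rule permutes_superset) (use p in auto)
    moreover have "\<forall>x\<in>?S1'. (p \<circ> transpose u v) x \<in> ?S1'"
    proof
      fix x assume x: "x \<in> ?S1'"
      then have xv: "x \<noteq> v" using vS1 by auto
      have "p x \<noteq> u"
      proof
        assume "p x = u"
        then have "p x = p v" using p by simp
        then have "x = v" using permutes_inj[OF p(1)] by (simp add: inj_eq)
        then show False using xv by simp
      qed
      then show "(p \<circ> transpose u v) x \<in> ?S1'" using x xv p(4) by auto
    qed
    ultimately show "p \<circ> transpose u v \<in> ?Q'" by simp
  next
    fix q assume "q \<in> ?Q'"
    then have q: "q permutes (?S1' \<union> ?S2')" "\<forall>x\<in>?S1'. q x \<in> ?S1'" by auto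
    have qu: "q u = u" by (rule permutes_not_in[OF q(1)]) (use uS2 in simp)
    have qv: "q v = v" by (rule permutes_not_in[OF q(1)]) (use vS1 in simp)
    show "q \<circ> transpose u v \<circ> transpose u v = q" by (simp add: comp_assoc)
    have qS: "q permutes ?S" by (rule permutes_subset[OF q(1)]) auto
    have "q \<circ> transpose u v permutes ?S"
      by (rule permutes_compose[OF permutes_swap_id qS]) (use u v in auto)
    moreover have "\<forall>x\<in>S1-{u}. (q \<circ> transpose u v) x \<in> S1"
    proof
      fix x assume x: "x \<in> S1 - {u}"
      then have "x \<noteq> v" using vS1 by auto
      then have "transpose u v x = x" using x by auto
      then show "(q \<circ> transpose u v) x \<in> S1" using q(2) x by auto
    qed
    ultimately show "q \<circ> transpose u v \<in> ?R" using qu qv uv by simp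
    have sg: "sign (q \<circ> transpose u v) = - sign q"
      by (subst sign_compose) (auto simp: sign_swap_id uv intro: permutes_imp_permutation[OF fS qS]
           permutation_swap_id)
    have Seq: "?S = insert u (insert v (?S1' \<union> ?S2'))" using u v by auto
    have "(\<Prod>x\<in>?S. M x ((q \<circ> transpose u v) x)) =
          M u v * (M v u * (\<Prod>x\<in>?S1' \<union> ?S2'. M x ((q \<circ> transpose u v) x)))"
    proof -
      have fS': "finite (?S1' \<union> ?S2')" using f1 f2 by simp
      have nu: "u \<notin> insert v (?S1' \<union> ?S2')" using uv uS2 by simp
      have nv: "v \<notin> ?S1' \<union> ?S2'" using vS1 by simp
      have fS'': "finite (insert v (?S1' \<union> ?S2'))" using fS' by simp
      show ?thesis unfolding Seq prod.insert[OF fS'' nu] prod.insert[OF fS' nv]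
        using qu qv by simp
    qed
    also have "(\<Prod>x\<in>?S1' \<union> ?S2'. M x ((q \<circ> transpose u v) x)) = (\<Prod>x\<in>?S1' \<union> ?S2'. M x (q x))"
    proof (rule prod.cong[OF refl])
      fix x assume x: "x \<in> ?S1' \<union> ?S2'"
      then have "x \<noteq> u" "x \<noteq> v" using uS2 vS1 by auto
      then show "M x ((q \<circ> transpose u v) x) = M x (q x)" by simp
    qed
    finally show "?f (q \<circ> transpose u v) = - (M u v * M v u) *
        (of_int (sign q) * (\<Prod>x\<in>?S1' \<union> ?S2'. M x (q x)))"
      using sg by (simp add: algebra_simps)
  qed
  also have "\<dots> = - (M u v * M v u) * (detS M ?S1' * detS M ?S2')"
    by (subst sum_distrib_left[symmetric]) (subst detS_core, use f1 f2 dj in auto)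
  finally show ?thesis by (simp add: algebra_simps detS_def)
qed

lemma cmat_diag: "cmat G x x = [:- adj G x x, 1:]"
  unfolding cmat_def by simp

lemma cmat_off: "x \<noteq> y \<Longrightarrow> cmat G x y = [:- adj G x y:]"
  unfolding cmat_def by simp

lemma detS_cmat_coeff:
  assumes fS: "finite S"
  shows "coeff (detS (cmat G) S) (card S) = 1"
proof -
  let ?t = "\<lambda>p. of_int (sign p) * (\<Prod>v\<in>S. cmat G v (p v))"
  have fP: "finite {p. p permutes S}" using fS by (simp add: finite_permutations)
  have idin: "id \<in> {p. p permutes S}" by (simp add: permutes_id)
  have "coeff (detS (cmat G) S) (card S) = (\<Sum>p\<in>{p. p permutes S}. coeff (?t p) (card S))"
    unfolding detS_def by (simp add: coeff_sum)
  also have "\<dots> = coeff (?t id) (card S) + (\<Sum>p\<in>{p. p permutes S} - {id}. coeff (?t p) (card S))"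
    by (rule sum.remove[OF fP idin])
  also have "(\<Sum>p\<in>{p. p permutes S} - {id}. coeff (?t p) (card S)) = 0"
  proof (rule sum.neutral, rule ballI)
    fix p assume "p \<in> {p. p permutes S} - {id}"
    then have p: "p permutes S" "p \<noteq> id" by auto
    obtain x0 where x0: "x0 \<in> S" "p x0 \<noteq> x0"
      using p permutes_not_in[OF p(1)] by (metis eq_id_iff)
    have "degree (?t p) \<le> degree (of_int (sign p) :: int poly) + degree (\<Prod>v\<in>S. cmat G v (p v))"
      by (rule degree_mult_le)
    also have "degree (of_int (sign p) :: int poly) = 0" by (simp add: degree_of_int)
    also have "degree (\<Prod>v\<in>S. cmat G v (p v)) \<le> (\<Sum>v\<in>S. degree (cmat G v (p v)))"
      using degree_prod_sum_le[OF fS] by (simp add: o_def)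
    also have "\<dots> \<le> (\<Sum>v\<in>S. if p v = v then 1 else 0)"
      by (rule sum_mono) (auto simp: cmat_diag cmat_off)
    also have "\<dots> = card {v\<in>S. p v = v}" using fS by (simp add: sum.If_cases Int_def conj_commute)
    also have "\<dots> < card S"
      by (rule psubset_card_mono[OF fS]) (use x0 in auto)
    finally show "coeff (?t p) (card S) = 0" by (simp add: coeff_eq_0)
  qed
  also have "coeff (?t id) (card S) = 1"
  proof -
    have nz: "\<And>v. cmat G v v \<noteq> 0" by (simp add: cmat_diag)
    have "degree (\<Prod>v\<in>S. cmat G v v) = (\<Sum>v\<in>S. degree (cmat G v v))"
      using nz by (simp add: degree_prod_eq_sum_degree)
    also have "\<dots> = card S" by (simp add: cmat_diag)
    finally have d: "degree (\<Prod>v\<in>S. cmat G v v) = card S" .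
    have "lead_coeff (\<Prod>v\<in>S. cmat G v v) = 1"
      by (simp add: lead_coeff_prod cmat_diag)
    then show ?thesis using d by simp
  qed
  finally show ?thesis by simp
qed

lemma detS_cmat_nz: "finite S \<Longrightarrow> detS (cmat G) S \<noteq> 0"
  using detS_cmat_coeff[of S G] by auto

fun K :: "'b::comm_ring_1 list \<Rightarrow> 'b" where
  "K [] = 1" | "K [x] = x" | "K (x # y # zs) = x * K (y # zs) - K zs"

lemma K_snoc2: "K (xs @ [y, z]) = K (xs @ [y]) * z - K xs"
proof (induction xs rule: K.induct)
  case (3 x ya zs)
  have A: "K (ya # zs @ [y,z]) = K (ya # zs @ [y]) * z - K (ya # zs)" using 3(1) by simp
  have B: "K (zs @ [y,z]) = K (zs @ [y]) * z - K zs" using 3(2) by simp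
  show ?case by (simp add: A B algebra_simps)
qed (auto simp: algebra_simps)

lemma K_rev: "K (rev xs) = K xs"
  by (induction xs rule: K.induct) (auto simp: K_snoc2 algebra_simps)

lemma charpoly_delete: "charpoly (delete_vertex H w) = detS (cmat H) (verts H - {w})"
proof -
  have "charpoly (delete_vertex H w) = detS (cmat (delete_vertex H w)) (verts H - {w})"
    by (simp add: charpoly_detS delete_vertex_def verts_def)
  also have "\<dots> = detS (cmat H) (verts H - {w})"
    by (rule detS_cong) (auto simp: cmat_def adj_def delete_vertex_def edges_def)
  finally show ?thesis .
qed

lemma fr_mult: "Fract (x * y) 1 = Fract x 1 * Fract (y::'b::idom) 1" by simp
lemma fr_diff: "Fract (x - y) 1 = Fract x 1 - Fract (y::'b::idom) 1" by simp

theorem lemma6: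
  fixes n :: nat and Gs :: "nat \<Rightarrow> 'a graph" and r :: "nat \<Rightarrow> 'a"
  assumes "n \<ge> 1"
    and "\<And>i. i \<in> {1..n} \<Longrightarrow> simple_graph (Gs i)"
    and "\<And>i. i \<in> {1..n} \<Longrightarrow> r i \<in> verts (Gs i)"
    and "\<And>i j. i \<in> {1..n} \<Longrightarrow> j \<in> {1..n} \<Longrightarrow> i \<noteq> j \<Longrightarrow>
           verts (Gs i) \<inter> verts (Gs j) = {}"
    and "\<And>i. i \<in> {1..n} \<Longrightarrow> alpha (Gs i) (r i) = alpha (Gs (n + 1 - i)) (r (n + 1 - i))"
  shows "alpha (decorated_path n Gs r) (r 1) = alpha (decorated_path n Gs r) (r n)"
proof -
  note n1 = assms(1)
  define G where "G = decorated_path n Gs r"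
  define V where "V = (\<lambda>i. verts (Gs i))"
  define M where "M = cmat G"
  define B where "B = (\<lambda>s t. \<Union>i\<in>{s..t}. V i)"
  define a where "a = (\<lambda>i. detS M (V i))"
  define b where "b = (\<lambda>i. detS M (V i - {r i}))"
  define L where "L = (\<lambda>s t. detS M (B s t))"
  have vG: "verts G = B 1 n" by (simp add: G_def B_def V_def decorated_path_def verts_def)
  have eG: "edges G = (\<Union>i\<in>{1..n}. edges (Gs i)) \<union> {{r i, r (Suc i)} | i. 1 \<le> i \<and> i < n}"
    by (simp add: G_def decorated_path_def edges_def)
  have fin: "\<And>i. i \<in> {1..n} \<Longrightarrow> finite (V i)"
    using assms(2) by (simp add: V_def simple_graph_def)
  have esub: "\<And>i e. i \<in> {1..n} \<Longrightarrow> e \<in> edges (Gs i) \<Longrightarrow> e \<subseteq> V i"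
    using assms(2) by (simp add: V_def simple_graph_def)
  have rin: "\<And>i. i \<in> {1..n} \<Longrightarrow> r i \<in> V i" using assms(3) by (simp add: V_def)
  have uniq: "\<And>i j x. i \<in> {1..n} \<Longrightarrow> j \<in> {1..n} \<Longrightarrow> x \<in> V i \<Longrightarrow> x \<in> V j \<Longrightarrow> i = j"
    using assms(4) unfolding V_def by blast
  have E1: "\<And>i x y. i \<in> {1..n} \<Longrightarrow> x \<in> V i \<Longrightarrow> y \<in> V i \<Longrightarrow>
      ({x, y} \<in> edges G) = ({x, y} \<in> edges (Gs i))"
  proof -
    fix i x y assume i: "i \<in> {1..n}" and x: "x \<in> V i" and y: "y \<in> V i"
    show "({x, y} \<in> edges G) = ({x, y} \<in> edges (Gs i))"
    proof
      assume "{x, y} \<in> edges G"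
      then consider (a) j where "j \<in> {1..n}" "{x, y} \<in> edges (Gs j)"
        | (b) j where "1 \<le> j" "j < n" "{x, y} = {r j, r (Suc j)}"
        unfolding eG by blast
      then show "{x, y} \<in> edges (Gs i)"
      proof cases
        case a
        then have "x \<in> V j" using esub by blast
        then have "j = i" using uniq a(1) i x by blast
        then show ?thesis using a by simp
      next
        case b
        have j1: "j \<in> {1..n}" and j2: "Suc j \<in> {1..n}" using b by auto
        have h1: "r j \<in> V i" "r (Suc j) \<in> V i" using b x y by (auto simp: doubleton_eq_iff)
        have "j = i" using uniq[OF j1 i, of "r j"] rin[OF j1] h1 by auto
        moreover have "Suc j = i" using uniq[OF j2 i, of "r (Suc j)"] rin[OF j2] h1 by auto
        ultimately show ?thesis by simp
      qed
    next
      assume "{x, y} \<in> edges (Gs i)"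
      then show "{x, y} \<in> edges G" unfolding eG using i by blast
    qed
  qed
  have E2: "\<And>i k x y. i \<in> {1..n} \<Longrightarrow> k \<in> {1..n} \<Longrightarrow> i \<noteq> k \<Longrightarrow> x \<in> V i \<Longrightarrow> y \<in> V k \<Longrightarrow>
      {x, y} \<in> edges G \<Longrightarrow> (k = Suc i \<or> i = Suc k) \<and> x = r i \<and> y = r k"
  proof -
    fix i k x y assume i: "i \<in> {1..n}" and k: "k \<in> {1..n}" and ik: "i \<noteq> k"
      and x: "x \<in> V i" and y: "y \<in> V k" and e: "{x, y} \<in> edges G"
    from e consider (a) j where "j \<in> {1..n}" "{x, y} \<in> edges (Gs j)"
        | (b) j where "1 \<le> j" "j < n" "{x, y} = {r j, r (Suc j)}"
        unfolding eG by blast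
    then show "(k = Suc i \<or> i = Suc k) \<and> x = r i \<and> y = r k"
    proof cases
      case a
      then have "x \<in> V j" "y \<in> V j" using esub by blast+
      then have "j = i" "j = k" using uniq a(1) i k x y by blast+
      then show ?thesis using ik by simp
    next
      case b
      have j1: "j \<in> {1..n}" and j2: "Suc j \<in> {1..n}" using b by auto
      have rj: "r j \<in> V j" "r (Suc j) \<in> V (Suc j)" using rin j1 j2 by auto
      from b(3) consider "x = r j" "y = r (Suc j)" | "x = r (Suc j)" "y = r j"
        by (auto simp: doubleton_eq_iff)
      then show ?thesis
      proof cases
        case 1
        then have "i = j" "k = Suc j" using uniq[OF i j1] uniq[OF k j2] x y rj by auto
        then show ?thesis using 1 by simp
      next
        case 2
        then have "i = Suc j" "k = j" using uniq[OF i j2] uniq[OF k j1] x y rj by auto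
        then show ?thesis using 2 by simp
      qed
    qed
  qed
  have crossM: "\<And>i k x y. i \<in> {1..n} \<Longrightarrow> k \<in> {1..n} \<Longrightarrow> i \<noteq> k \<Longrightarrow> x \<in> V i \<Longrightarrow> y \<in> V k \<Longrightarrow>
      \<not> ((k = Suc i \<or> i = Suc k) \<and> x = r i \<and> y = r k) \<Longrightarrow> M x y = 0"
  proof -
    fix i k x y assume i: "i \<in> {1..n}" and k: "k \<in> {1..n}" and ik: "i \<noteq> k"
      and x: "x \<in> V i" and y: "y \<in> V k" and nn: "\<not> ((k = Suc i \<or> i = Suc k) \<and> x = r i \<and> y = r k)"
    have xy: "x \<noteq> y" using uniq[OF i k] x y ik by auto
    have "{x, y} \<notin> edges G" using E2[OF i k ik x y] nn by blast
    then show "M x y = 0" using xy by (simp add: M_def cmat_def adj_def)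
  qed
  have Muv: "\<And>s. 1 \<le> s \<Longrightarrow> s < n \<Longrightarrow> M (r s) (r (Suc s)) * M (r (Suc s)) (r s) = 1"
  proof -
    fix s :: nat assume s: "1 \<le> s" "s < n"
    have j1: "s \<in> {1..n}" and j2: "Suc s \<in> {1..n}" using s by auto
    have ne: "r s \<noteq> r (Suc s)" using uniq[OF j1 j2] rin[OF j1] rin[OF j2] by auto
    have e1: "{r s, r (Suc s)} \<in> edges G" unfolding eG using s by blast
    have e2: "{r (Suc s), r s} \<in> edges G" using e1 by (simp add: insert_commute)
    show "M (r s) (r (Suc s)) * M (r (Suc s)) (r s) = 1"
      using ne e1 e2 by (simp add: M_def cmat_def adj_def)
  qed
  have finB: "\<And>s t :: nat. 1 \<le> s \<Longrightarrow> t \<le> n \<Longrightarrow> finite (B s t)"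
    unfolding B_def using fin by auto
  have Bsplit: "\<And>s t :: nat. s \<le> t \<Longrightarrow> B s t = V s \<union> B (Suc s) t"
    unfolding B_def by (auto simp: Icc_eq_insert_lb_nat)
  have Bempty: "\<And>s t :: nat. t < s \<Longrightarrow> B s t = {}" unfolding B_def by auto
  have inB: "\<And>(s::nat) t y. y \<in> B s t \<Longrightarrow> \<exists>k\<in>{s..t}. y \<in> V k" unfolding B_def by auto
  have Bdj: "\<And>s t :: nat. 1 \<le> s \<Longrightarrow> t \<le> n \<Longrightarrow> V s \<inter> B (Suc s) t = {}"
  proof -
    fix s t :: nat assume s: "1 \<le> s" "t \<le> n"
    show "V s \<inter> B (Suc s) t = {}"
    proof (rule ccontr)
      assume "V s \<inter> B (Suc s) t \<noteq> {}"
      then obtain y k where y: "y \<in> V s" "k \<in> {Suc s..t}" "y \<in> V k" using inB by blast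
      then have "s = k" using uniq[of s k y] s by auto
      then show False using y by auto
    qed
  qed
  have rec: "\<And>s t :: nat. 1 \<le> s \<Longrightarrow> s < t \<Longrightarrow> t \<le> n \<Longrightarrow>
      L s t = a s * L (Suc s) t - b s * b (Suc s) * L (Suc (Suc s)) t"
  proof -
    fix s t :: nat assume s: "1 \<le> s" and st: "s < t" and t: "t \<le> n"
    have sn: "s \<in> {1..n}" and s1n: "Suc s \<in> {1..n}" using s st t by auto
    have v: "r (Suc s) \<in> B (Suc s) t" unfolding B_def using rin[OF s1n] st by auto
    have br: "detS M (V s \<union> B (Suc s) t) = detS M (V s) * detS M (B (Suc s) t)
        - M (r s) (r (Suc s)) * M (r (Suc s)) (r s) * detS M (V s - {r s}) * detS M (B (Suc s) t - {r (Suc s)})"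
    proof (rule detS_bridge)
      show "finite (V s)" using fin sn by auto
      show "finite (B (Suc s) t)" using finB t by auto
      show "V s \<inter> B (Suc s) t = {}" using Bdj s t by auto
      show "r s \<in> V s" using rin sn by auto
      show "r (Suc s) \<in> B (Suc s) t" by (rule v)
    next
      fix x y assume x: "x \<in> V s" and y: "y \<in> B (Suc s) t" and nuv: "x \<noteq> r s \<or> y \<noteq> r (Suc s)"
      obtain k where k: "k \<in> {Suc s..t}" "y \<in> V k" using inB y by blast
      have kn: "k \<in> {1..n}" using k s t by auto
      show "M x y = 0" by (rule crossM[OF sn kn _ x k(2)]) (use k nuv in auto)
      show "M y x = 0" by (rule crossM[OF kn sn _ k(2) x]) (use k nuv in auto)
    qed
    have B2: "B (Suc s) t - {r (Suc s)} = (V (Suc s) - {r (Suc s)}) \<union> B (Suc (Suc s)) t"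
    proof -
      have "r (Suc s) \<notin> B (Suc (Suc s)) t" using Bdj[of "Suc s" t] t rin[OF s1n] by auto
      then show ?thesis using Bsplit[of "Suc s" t] st by auto
    qed
    have bl: "detS M (B (Suc s) t - {r (Suc s)}) = b (Suc s) * L (Suc (Suc s)) t"
      unfolding B2 b_def L_def
    proof (rule detS_block)
      show "finite (V (Suc s) - {r (Suc s)})" using fin s1n by auto
      show "finite (B (Suc (Suc s)) t)" using finB t by auto
      show "(V (Suc s) - {r (Suc s)}) \<inter> B (Suc (Suc s)) t = {}" using Bdj[of "Suc s" t] t by auto
    next
      fix x y assume x: "x \<in> V (Suc s) - {r (Suc s)}" and y: "y \<in> B (Suc (Suc s)) t"
      obtain k where k: "k \<in> {Suc (Suc s)..t}" "y \<in> V k" using inB y by blast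
      have kn: "k \<in> {1..n}" using k s t by auto
      show "M x y = 0" by (rule crossM[OF s1n kn _ _ k(2)]) (use k x in auto)
    qed
    show "L s t = a s * L (Suc s) t - b s * b (Suc s) * L (Suc (Suc s)) t"
      using br bl Muv[OF s] st t Bsplit[of s t] unfolding L_def a_def b_def
      by (simp add: algebra_simps)
  qed
  have ab_char: "\<And>i. i \<in> {1..n} \<Longrightarrow> charpoly (Gs i) = a i \<and> charpoly (delete_vertex (Gs i) (r i)) = b i"
  proof -
    fix i assume i: "i \<in> {1..n}"
    have cm: "\<And>x y. x \<in> V i \<Longrightarrow> y \<in> V i \<Longrightarrow> cmat (Gs i) x y = M x y"
      using E1[OF i] by (simp add: M_def cmat_def adj_def)
    have "charpoly (Gs i) = detS (cmat (Gs i)) (V i)" by (simp add: charpoly_detS V_def)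
    also have "\<dots> = a i" unfolding a_def by (rule detS_cong) (use cm in auto)
    finally have 1: "charpoly (Gs i) = a i" .
    have "charpoly (delete_vertex (Gs i) (r i)) = detS (cmat (Gs i)) (V i - {r i})"
      by (simp add: charpoly_delete V_def)
    also have "\<dots> = b i" unfolding b_def by (rule detS_cong) (use cm in auto)
    finally show "charpoly (Gs i) = a i \<and> charpoly (delete_vertex (Gs i) (r i)) = b i" using 1 by simp
  qed
  have bnz: "\<And>i. i \<in> {1..n} \<Longrightarrow> b i \<noteq> 0"
    unfolding b_def M_def using fin by (auto intro!: detS_cmat_nz)
  define bf where "bf = (\<lambda>i. Fract (b i) 1)"
  define al where "al = (\<lambda>i. Fract (a i) (b i))"
  have al_sym: "\<And>i. i \<in> {1..n} \<Longrightarrow> al i = al (n + 1 - i)"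
  proof -
    fix i assume i: "i \<in> {1..n}"
    have i': "n + 1 - i \<in> {1..n}" using i by auto
    show "al i = al (n + 1 - i)"
      using assms(5)[OF i] ab_char[OF i] ab_char[OF i'] by (simp add: alpha_def al_def)
  qed
  have afac: "\<And>i. i \<in> {1..n} \<Longrightarrow> Fract (a i) 1 = bf i * al i"
    using bnz by (simp add: bf_def al_def eq_fract)
  have C: "\<And>k s t. Suc t - s = k \<Longrightarrow> 1 \<le> s \<Longrightarrow> s \<le> Suc t \<Longrightarrow> t \<le> n \<Longrightarrow>
      Fract (L s t) 1 = (\<Prod>i\<in>{s..t}. bf i) * K (map al [s..<Suc t])"
  proof -
    fix k s t
    show "Suc t - s = k \<Longrightarrow> 1 \<le> s \<Longrightarrow> s \<le> Suc t \<Longrightarrow> t \<le> n \<Longrightarrow>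
      Fract (L s t) 1 = (\<Prod>i\<in>{s..t}. bf i) * K (map al [s..<Suc t])"
    proof (induction k arbitrary: s rule: less_induct)
      case (less k s)
      consider "s = Suc t" | "s = t" | "s < t" using less.prems by linarith
      then show ?case
      proof cases
        case 1
        then show ?thesis by (simp add: L_def Bempty One_fract_def)
      next
        case 2
        have sn: "s \<in> {1..n}" using less.prems 2 by auto
        have "B s s = V s" unfolding B_def by simp
        then show ?thesis using 2 afac[OF sn] by (simp add: L_def a_def)
      next
        case 3
        have sn: "s \<in> {1..n}" using less.prems 3 by auto
        have IH1: "Fract (L (Suc s) t) 1 = (\<Prod>i\<in>{Suc s..t}. bf i) * K (map al [Suc s..<Suc t])"
          by (rule less.IH[of "Suc t - Suc s" "Suc s"]) (use less.prems 3 in auto)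
        have IH2: "Fract (L (Suc (Suc s)) t) 1 = (\<Prod>i\<in>{Suc (Suc s)..t}. bf i) * K (map al [Suc (Suc s)..<Suc t])"
          by (rule less.IH[of "Suc t - Suc (Suc s)" "Suc (Suc s)"]) (use less.prems 3 in auto)
        have l1: "[s..<Suc t] = s # Suc s # [Suc (Suc s)..<Suc t]" using 3 by (simp add: upt_conv_Cons)
        have l2: "[Suc s..<Suc t] = Suc s # [Suc (Suc s)..<Suc t]" using 3 by (simp add: upt_conv_Cons)
        have p1: "(\<Prod>i\<in>{s..t}. bf i) = bf s * (\<Prod>i\<in>{Suc s..t}. bf i)"
          using 3 by (simp add: prod.atLeast_Suc_atMost)
        have p2: "(\<Prod>i\<in>{Suc s..t}. bf i) = bf (Suc s) * (\<Prod>i\<in>{Suc (Suc s)..t}. bf i)"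
          using 3 by (simp add: prod.atLeast_Suc_atMost)
        have "Fract (L s t) 1 = Fract (a s) 1 * Fract (L (Suc s) t) 1 - bf s * bf (Suc s) * Fract (L (Suc (Suc s)) t) 1"
          using rec[of s t] less.prems 3 by (simp add: bf_def)
        also have "\<dots> = (\<Prod>i\<in>{s..t}. bf i) * K (map al [s..<Suc t])"
          unfolding IH1 IH2 afac[OF sn] l1 l2 p1 p2 by (simp add: algebra_simps)
        finally show ?thesis .
      qed
    qed
  qed
  have D1: "charpoly (delete_vertex G (r 1)) = b 1 * L 2 n"
  proof -
    have n1': "1 \<in> {1..n}" using n1 by auto
    have "verts G - {r 1} = (V 1 - {r 1}) \<union> B 2 n"
      using vG Bsplit[of 1 n] n1 Bdj[of 1 n] rin[OF n1'] by (auto simp: numeral_2_eq_2)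
    then have "charpoly (delete_vertex G (r 1)) = detS M ((V 1 - {r 1}) \<union> B 2 n)"
      by (simp add: charpoly_delete M_def)
    also have "\<dots> = b 1 * L 2 n" unfolding b_def L_def
    proof (rule detS_block)
      show "finite (V 1 - {r 1})" using fin n1' by auto
      show "finite (B 2 n)" using finB by auto
      show "(V 1 - {r 1}) \<inter> B 2 n = {}" using Bdj[of 1 n] by (auto simp: numeral_2_eq_2)
    next
      fix x y assume x: "x \<in> V 1 - {r 1}" and y: "y \<in> B 2 n"
      obtain k where k: "k \<in> {2..n}" "y \<in> V k" using inB y by blast
      have kn: "k \<in> {1..n}" using k by auto
      show "M x y = 0" by (rule crossM[OF n1' kn _ _ k(2)]) (use k x in auto)
    qed
    finally show ?thesis .
  qed
  have Dn: "charpoly (delete_vertex G (r n)) = L 1 (n - 1) * b n"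
  proof -
    have nn: "n \<in> {1..n}" using n1 by auto
    have ins: "{1..n} = insert n {1..n-1}" using n1 by auto
    have Bn: "B 1 n = B 1 (n - 1) \<union> V n" unfolding B_def by (subst ins) auto
    have "r n \<notin> B 1 (n - 1)"
    proof
      assume "r n \<in> B 1 (n - 1)"
      then obtain k where k: "k \<in> {1..n-1}" "r n \<in> V k" using inB by blast
      then have "k = n" using uniq[of k n "r n"] rin[OF nn] n1 by auto
      then show False using k n1 by auto
    qed
    then have "verts G - {r n} = B 1 (n - 1) \<union> (V n - {r n})"
      using vG Bn by auto
    then have "charpoly (delete_vertex G (r n)) = detS M (B 1 (n - 1) \<union> (V n - {r n}))"
      by (simp add: charpoly_delete M_def)
    also have "\<dots> = L 1 (n - 1) * b n" unfolding b_def L_def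
    proof (rule detS_block)
      show "finite (V n - {r n})" using fin nn by auto
      show "finite (B 1 (n - 1))" using finB by auto
      show "B 1 (n - 1) \<inter> (V n - {r n}) = {}"
      proof (rule ccontr)
        assume "B 1 (n - 1) \<inter> (V n - {r n}) \<noteq> {}"
        then obtain y k where k: "k \<in> {1..n-1}" "y \<in> V k" "y \<in> V n" using inB by blast
        then have "k = n" using uniq[of k n y] n1 by auto
        then show False using k n1 by auto
      qed
    next
      fix x y assume x: "x \<in> B 1 (n - 1)" and y: "y \<in> V n - {r n}"
      obtain k where k: "k \<in> {1..n-1}" "x \<in> V k" using inB x by blast
      have kn: "k \<in> {1..n}" using k by auto
      show "M x y = 0" by (rule crossM[OF kn nn _ k(2)]) (use k y n1 in auto)
    qed
    finally show ?thesis .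
  qed
  have K_eq: "K (map al [2..<Suc n]) = K (map al [1..<n])"
  proof -
    have "rev (map al [2..<Suc n]) = map al [1..<n]"
    proof (rule nth_equalityI)
      show "length (rev (map al [2..<Suc n])) = length (map al [1..<n])" using n1 by (simp del: upt_Suc)
    next
      fix k assume "k < length (rev (map al [2..<Suc n]))"
      then have k: "k < n - 1" by (simp del: upt_Suc)
      have ar: "Suc (Suc (n - Suc (Suc k))) = n - k" using k by arith
      have "rev (map al [2..<Suc n]) ! k = al (n - k)"
        using k ar by (simp add: rev_nth del: upt_Suc)
      also have "\<dots> = al (1 + k)" using al_sym[of "1 + k"] k by simp
      also have "\<dots> = map al [1..<n] ! k" using k by simp
      finally show "rev (map al [2..<Suc n]) ! k = map al [1..<n] ! k" .
    qed
    then show ?thesis by (metis K_rev)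
  qed
  have "Fract (b 1 * L 2 n) 1 = Fract (L 1 (n - 1) * b n) 1"
  proof -
    have c1: "Fract (L 2 n) 1 = (\<Prod>i\<in>{2..n}. bf i) * K (map al [2..<Suc n])"
      by (rule C[where s=2 and t=n, OF refl]) (use n1 in auto)
    have c2: "Fract (L 1 (n - 1)) 1 = (\<Prod>i\<in>{1..n-1}. bf i) * K (map al [1..<n])"
      using C[where s=1 and t="n - 1", OF refl] n1 by simp
    have p1: "(\<Prod>i\<in>{1..n}. bf i) = bf 1 * (\<Prod>i\<in>{2..n}. bf i)"
      using n1 by (simp add: prod.atLeast_Suc_atMost numeral_2_eq_2)
    have p2: "(\<Prod>i\<in>{1..n}. bf i) = (\<Prod>i\<in>{1..n-1}. bf i) * bf n"
      using n1 by (cases n) auto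
    have bfE: "\<And>i. Fract (b i) 1 = bf i" by (simp add: bf_def)
    have "bf 1 * ((\<Prod>i\<in>{2..n}. bf i) * K (map al [1..<n])) = (\<Prod>i\<in>{1..n}. bf i) * K (map al [1..<n])"
      unfolding p1 by (simp only: mult.assoc)
    also have "\<dots> = ((\<Prod>i\<in>{1..n-1}. bf i) * K (map al [1..<n])) * bf n"
      unfolding p2 by (simp only: ac_simps)
    finally show ?thesis unfolding fr_mult c1 c2 K_eq bfE .
  qed
  then have "b 1 * L 2 n = L 1 (n - 1) * b n" by (simp add: eq_fract)
  then have e: "charpoly (delete_vertex G (r 1)) = charpoly (delete_vertex G (r n))"
    using D1 Dn by simp
  have "alpha G (r 1) = alpha G (r n)"
    unfolding alpha_def by (rule arg_cong[OF e])
  then show ?thesis by (simp only: G_def)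
qed

end
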